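(* Let $G$ be a simple directed graph and $W$ a CTLN with graph $G$ (legal parameters, nondegenerate). Suppose $\sigma$ is a permitted motif with $\sigma=\tau\cup\{k\}$, $k\notin\tau$, where $\tau$ has uniform in-degree $d$ and the in-degree of $k$ in $G|_\sigma$ satisfies $d^{in}_k\le d$. Then $\operatorname{idx}(\sigma)=-\operatorname{idx}(\tau)$.
   Context: Legal parameters: $\delta>0$, $0<\varepsilon<\frac{\delta}{\delta+1}$. $W=W(G,\varepsilon,\delta)$ has $W_{ii}=0$, $W_{ij}=-1+\varepsilon$ if $j\to i$, $W_{ij}=-1-\delta$ if $i\ne j$, $j\not\to i$; dynamics $\dot x_i=-x_i+[\sum_jW_{ij}x_j+\theta]_+$, $\theta>0$; nondegenerate: $\det(I-W_\rho)\ne0$ and all Cramer determinants for $(I-W_\rho)x=\theta1_\rho$ nonzero for all $\rho$. $W_\rho$ is the principal submatrix on $\rho$. $\sigma$ is a permitted motif if $\theta(I-W_\sigma)^{-1}1_\sigma$ has all entries positive. $\tau$ has uniform in-degree $d$ if every node of $\tau$ has in-degree $d$ in $G|_\tau$. $\operatorname{idx}(\rho)=\operatorname{sgn}\det(I-W_\rho)$. *)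

theory Defs
  imports "Jordan_Normal_Form.Determinant" "Jordan_Normal_Form.DL_Submatrix"
    "Jordan_Normal_Form.Gauss_Jordan_Elimination"
begin

text \<open>Vertices of G are 0,...,n-1. E j i means the edge j -> i.
  G is a simple directed graph: no self loops (E i i false).\<close>

definition simple_digraph :: "nat \<Rightarrow> (nat \<Rightarrow> nat \<Rightarrow> bool) \<Rightarrow> bool" where
  "simple_digraph n E \<longleftrightarrow> (\<forall>i<n. \<not> E i i)"

definition legal_params :: "real \<Rightarrow> real \<Rightarrow> bool" where
  "legal_params \<epsilon> \<delta> \<longleftrightarrow> \<delta> > 0 \<and> 0 < \<epsilon> \<and> \<epsilon> < \<delta> / (\<delta> + 1)"

definition ctln_W :: "nat \<Rightarrow> (nat \<Rightarrow> nat \<Rightarrow> bool) \<Rightarrow> real \<Rightarrow> real \<Rightarrow> real mat" where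
  "ctln_W n E \<epsilon> \<delta> = mat n n (\<lambda>(i,j). if i = j then 0
      else if E j i then -1 + \<epsilon> else -1 - \<delta>)"

definition IW :: "real mat \<Rightarrow> nat set \<Rightarrow> real mat" where
  "IW W \<rho> = 1\<^sub>m (card {i. i < dim_row W \<and> i \<in> \<rho>}) - submatrix W \<rho> \<rho>"

definition theta_vec :: "real \<Rightarrow> real mat \<Rightarrow> nat set \<Rightarrow> real vec" where
  "theta_vec \<theta> W \<rho> = vec (card {i. i < dim_row W \<and> i \<in> \<rho>}) (\<lambda>_. \<theta>)"

definition nondegenerate :: "real mat \<Rightarrow> real \<Rightarrow> bool" where
  "nondegenerate W \<theta> \<longleftrightarrow> (\<forall>\<rho> \<subseteq> {..<dim_row W}.
     det (IW W \<rho>) \<noteq> 0 \<and>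
     (\<forall>i < card \<rho>. det (replace_col (IW W \<rho>) (theta_vec \<theta> W \<rho>) i) \<noteq> 0))"

definition permitted_motif :: "real mat \<Rightarrow> real \<Rightarrow> nat set \<Rightarrow> bool" where
  "permitted_motif W \<theta> \<sigma> \<longleftrightarrow>
     (case mat_inverse (IW W \<sigma>) of
        None \<Rightarrow> False
      | Some B \<Rightarrow> (\<forall>i < card \<sigma>. (B *\<^sub>v theta_vec \<theta> W \<sigma>) $ i > 0))"

definition in_deg :: "(nat \<Rightarrow> nat \<Rightarrow> bool) \<Rightarrow> nat set \<Rightarrow> nat \<Rightarrow> nat" where
  "in_deg E \<tau> i = card {j \<in> \<tau>. E j i}"

definition uniform_in_degree :: "(nat \<Rightarrow> nat \<Rightarrow> bool) \<Rightarrow> nat set \<Rightarrow> nat \<Rightarrow> bool" where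
  "uniform_in_degree E \<tau> d \<longleftrightarrow> (\<forall>i \<in> \<tau>. in_deg E \<tau> i = d)"

definition idx :: "real mat \<Rightarrow> nat set \<Rightarrow> real" where
  "idx W \<rho> = sgn (det (IW W \<rho>))"

end

theory Submission
  imports Defs
begin

lemma pick_inj:
  assumes "finite S" "a < card S" "b < card S" "pick S a = pick S b"
  shows "a = b"
proof (rule ccontr)
  assume "a \<noteq> b"
  then consider "a < b" | "b < a" by linarith
  then show False
    using pick_mono[of b S a] pick_mono[of a S b] assms by (cases, auto)
qed

lemma pick_bij:
  assumes "finite S"
  shows "bij_betw (pick S) {..<card S} S"
proof -
  have inj: "inj_on (pick S) {..<card S}"
    using pick_inj[OF assms] by (auto simp: inj_on_def)
  have sub: "pick S ` {..<card S} \<subseteq> S" using pick_in_set by auto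
  have "card (pick S ` {..<card S}) = card S" using card_image[OF inj] by simp
  then have "pick S ` {..<card S} = S" using card_subset_eq[OF assms sub] by simp
  then show ?thesis using inj by (simp add: bij_betw_def)
qed

lemma sum_pick:
  assumes "finite S"
  shows "(\<Sum>a<card S. f (pick S a)) = (\<Sum>u\<in>S. f u)"
  using sum.reindex_bij_betw[OF pick_bij[OF assms], of f] by simp

definition gW :: "(nat \<Rightarrow> nat \<Rightarrow> bool) \<Rightarrow> real \<Rightarrow> real \<Rightarrow> nat \<Rightarrow> nat \<Rightarrow> real" where
  "gW E \<epsilon> \<delta> i j = (if i = j then 1 else if E j i then 1 - \<epsilon> else 1 + \<delta>)"

lemma IW_carrier:
  assumes "\<rho> \<subseteq> {..<n}"
  shows "IW (ctln_W n E \<epsilon> \<delta>) \<rho> \<in> carrier_mat (card \<rho>) (card \<rho>)"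
proof -
  have S: "{i. i < n \<and> i \<in> \<rho>} = \<rho>" using assms by auto
  have "dim_row (IW (ctln_W n E \<epsilon> \<delta>) \<rho>) = card \<rho>" "dim_col (IW (ctln_W n E \<epsilon> \<delta>) \<rho>) = card \<rho>"
    unfolding IW_def using S by (simp_all add: ctln_W_def dim_submatrix)
  then show ?thesis by (intro carrier_matI)
qed

lemma IW_entry:
  assumes "\<rho> \<subseteq> {..<n}" "a < card \<rho>" "b < card \<rho>"
  shows "IW (ctln_W n E \<epsilon> \<delta>) \<rho> $$ (a,b) = gW E \<epsilon> \<delta> (pick \<rho> a) (pick \<rho> b)"
proof -
  have S: "{i. i < n \<and> i \<in> \<rho>} = \<rho>" using assms by auto
  have fin: "finite \<rho>" using assms(1) finite_subset by blast
  have pa: "pick \<rho> a < n" "pick \<rho> b < n" using pick_in_set[of a \<rho>] pick_in_set[of b \<rho>] assms by auto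
  have eq: "pick \<rho> a = pick \<rho> b \<longleftrightarrow> a = b" using pick_inj[OF fin] assms by auto
  have "IW (ctln_W n E \<epsilon> \<delta>) \<rho> $$ (a,b) = 1\<^sub>m (card \<rho>) $$ (a,b) - submatrix (ctln_W n E \<epsilon> \<delta>) \<rho> \<rho> $$ (a,b)"
    unfolding IW_def using assms S by (simp add: ctln_W_def dim_submatrix)
  also have "\<dots> = (if a = b then 1 else 0) - ctln_W n E \<epsilon> \<delta> $$ (pick \<rho> a, pick \<rho> b)"
    using assms S by (simp add: submatrix_index ctln_W_def)
  also have "\<dots> = gW E \<epsilon> \<delta> (pick \<rho> a) (pick \<rho> b)"
    using pa eq by (simp add: ctln_W_def gW_def)
  finally show ?thesis .
qed

lemma pick_insert:
  assumes fin: "finite \<tau>" and kt: "k \<notin> \<tau>" and a: "a < card \<tau>"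
    and p: "p = card {x \<in> insert k \<tau>. x < k}"
  shows "pick (insert k \<tau>) (insert_index p a) = pick \<tau> a"
proof -
  define q where "q = pick \<tau> a"
  have qt: "q \<in> \<tau>" using pick_in_set a q_def by auto
  have cq: "card {x\<in>\<tau>. x < q} = a" using card_pick a q_def by auto
  have qk: "q \<noteq> k" using qt kt by auto
  have key: "pick (insert k \<tau>) (card {x \<in> insert k \<tau>. x < q}) = q"
    using pick_card_in_set[of q "insert k \<tau>"] qt by auto
  show ?thesis
  proof (cases "k < q")
    case True
    have s1: "{x \<in> insert k \<tau>. x < q} = insert k {x\<in>\<tau>. x < q}" using True by auto
    have c1: "card {x \<in> insert k \<tau>. x < q} = Suc a" using s1 cq kt fin by simp
    have "{x \<in> insert k \<tau>. x < k} \<subseteq> {x\<in>\<tau>. x < q}" using True by auto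
    then have "p \<le> a" unfolding p using cq card_mono[of "{x\<in>\<tau>. x < q}"] fin by fastforce
    then show ?thesis using c1 key q_def by (simp add: insert_index_def)
  next
    case False
    then have kq: "q < k" using qk by linarith
    have s1: "{x \<in> insert k \<tau>. x < q} = {x\<in>\<tau>. x < q}" using kq by auto
    have "{x\<in>\<tau>. x < q} \<subset> {x \<in> insert k \<tau>. x < k}" using kq qt by auto
    then have "card {x\<in>\<tau>. x < q} < card {x \<in> insert k \<tau>. x < k}"
      by (intro psubset_card_mono) (use fin in auto)
    then have "a < p" unfolding p using cq by simp
    then show ?thesis using s1 cq key q_def by (simp add: insert_index_def)
  qed
qed

lemma sum_if_count:
  assumes "finite T"
  shows "(\<Sum>u\<in>T. (if P u then a else b)) = real (card {u\<in>T. P u}) * a + real (card {u\<in>T. \<not> P u}) * (b::real)"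
proof -
  have "(\<Sum>u\<in>T. (if P u then a else b)) = (\<Sum>u\<in>{u\<in>T. P u}. a) + (\<Sum>u\<in>{u\<in>T. \<not> P u}. b)"
    using sum.If_cases[OF assms, of P "\<lambda>_. a" "\<lambda>_. b"] by (simp add: Collect_conj_eq Collect_neg_eq Int_commute)
  then show ?thesis by simp
qed

lemma card_split_real:
  assumes "finite T"
  shows "real (card {u\<in>T. P u}) + real (card {u\<in>T. \<not> P u}) = real (card T)"
  using sum_if_count[OF assms, of P 1 1] by simp

theorem lemma6:
  fixes n :: nat and E :: "nat \<Rightarrow> nat \<Rightarrow> bool" and \<epsilon> \<delta> \<theta> :: real
    and \<sigma> \<tau> :: "nat set" and k d :: nat
  assumes "simple_digraph n E"
    and "legal_params \<epsilon> \<delta>"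
    and "\<theta> > 0"
    and "nondegenerate (ctln_W n E \<epsilon> \<delta>) \<theta>"
    and "\<sigma> \<subseteq> {..<n}"
    and "permitted_motif (ctln_W n E \<epsilon> \<delta>) \<theta> \<sigma>"
    and "\<sigma> = \<tau> \<union> {k}" and "k \<notin> \<tau>" and "\<tau> \<noteq> {}"
    and "uniform_in_degree E \<tau> d"
    and "in_deg E \<sigma> k \<le> d"
  shows "idx (ctln_W n E \<epsilon> \<delta>) \<sigma> = - idx (ctln_W n E \<epsilon> \<delta>) \<tau>"
proof -
  note simple = assms(1) and sigma = assms(7) and kt = assms(8)
  let ?W = "ctln_W n E \<epsilon> \<delta>"
  have dimW: "dim_row ?W = n" by (simp add: ctln_W_def)
  have sub: "\<sigma> \<subseteq> {..<n}" by fact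
  have sig: "\<sigma> = insert k \<tau>" using sigma by auto
  have tsub: "\<tau> \<subseteq> {..<n}" using sub sig by auto
  have kn: "k < n" using sub sig by auto
  have fins: "finite \<sigma>" using sub finite_subset by blast
  have fint: "finite \<tau>" using tsub finite_subset by blast
  define m where "m = card \<sigma>"
  have m: "m = Suc (card \<tau>)" unfolding m_def sig using fint kt by simp
  define A where "A = IW ?W \<sigma>"
  define At where "At = IW ?W \<tau>"
  have A: "A \<in> carrier_mat m m" unfolding A_def m_def using IW_carrier[OF sub] .
  have At: "At \<in> carrier_mat (card \<tau>) (card \<tau>)" unfolding At_def using IW_carrier[OF tsub] .
  define p where "p = card {x \<in> \<sigma>. x < k}"
  have pk: "pick \<sigma> p = k" unfolding p_def using pick_card_in_set[of k \<sigma>] sig by auto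
  have "{x \<in> \<sigma>. x < k} \<subset> \<sigma>" using sig by auto
  then have pm: "p < m" unfolding p_def m_def using fins psubset_card_mono by blast
  have pick_eq_k: "pick \<sigma> b = k \<longleftrightarrow> b = p" if "b < m" for b
    using pick_inj[OF fins, of b p] that pm pk unfolding m_def by auto
  have del: "mat_delete A p p = At"
  proof (rule eq_matI)
    show "dim_row (mat_delete A p p) = dim_row At" "dim_col (mat_delete A p p) = dim_col At"
      using A At m by auto
    fix a b assume a: "a < dim_row At" and b: "b < dim_col At"
    then have a': "a < card \<tau>" and b': "b < card \<tau>" using At by auto
    have ia: "insert_index p a < m" "insert_index p b < m" using a' b' m by (auto simp: insert_index_def)
    have "mat_delete A p p $$ (a, b) = A $$ (insert_index p a, insert_index p b)"
      using a' b' A m by (simp add: mat_delete_def insert_index_def)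
    also have "\<dots> = gW E \<epsilon> \<delta> (pick \<sigma> (insert_index p a)) (pick \<sigma> (insert_index p b))"
      unfolding A_def using IW_entry[OF sub] ia unfolding m_def by auto
    also have "\<dots> = gW E \<epsilon> \<delta> (pick \<tau> a) (pick \<tau> b)"
      using pick_insert[OF fint kt a', of p] pick_insert[OF fint kt b', of p] unfolding p_def sig by simp
    also have "\<dots> = At $$ (a, b)" unfolding At_def using IW_entry[OF tsub a' b'] by simp
    finally show "mat_delete A p p $$ (a, b) = At $$ (a, b)" .
  qed
  have cof: "cofactor A p p = det At" unfolding cofactor_def del by simp
  have tv: "theta_vec \<theta> ?W \<sigma> = vec m (\<lambda>_. \<theta>)"
  proof -
    have "{i. i < dim_row ?W \<and> i \<in> \<sigma>} = \<sigma>" using sub dimW by auto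
    then show ?thesis unfolding theta_vec_def m_def by simp
  qed
  obtain B where invB: "mat_inverse A = Some B"
    and pos: "\<forall>i < m. (B *\<^sub>v vec m (\<lambda>_. \<theta>)) $ i > 0"
    using assms(6) unfolding permitted_motif_def A_def[symmetric] tv m_def[symmetric]
    by (cases "mat_inverse A") auto
  have AB: "A * B = 1\<^sub>m m" and Bc: "B \<in> carrier_mat m m" using mat_inverse(2)[OF A invB] by auto
  define C where "C = adj_mat A"
  have Cc: "C \<in> carrier_mat m m" and CA: "C * A = det A \<cdot>\<^sub>m 1\<^sub>m m"
    using adj_mat[OF A] unfolding C_def by auto
  have CB: "C = det A \<cdot>\<^sub>m B"
  proof -
    have "C = C * (A * B)" using AB Cc by simp
    also have "\<dots> = (C * A) * B" using Cc A Bc by (simp add: assoc_mult_mat)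
    also have "\<dots> = det A \<cdot>\<^sub>m B" using CA Bc mult_smult_assoc_mat[of "1\<^sub>m m" m m B m "det A"] by simp
    finally show ?thesis .
  qed
  have nkk: "\<not> E k k" using simple kn unfolding simple_digraph_def by auto
  define dk where "dk = card {u\<in>\<tau>. E u k}"
  have dk_le: "dk \<le> d"
  proof -
    have "{j\<in>\<sigma>. E j k} = {u\<in>\<tau>. E u k}" using sig nkk by auto
    then show ?thesis using assms(11) unfolding in_deg_def dk_def by simp
  qed
  define F where "F x = (\<Sum>u\<in>\<tau>. gW E \<epsilon> \<delta> x u)" for x
  define r where "r = 1 + real d * (1 - \<epsilon>) + (real (card \<tau>) - 1 - real d) * (1 + \<delta>)"
  define s where "s = real dk * (1 - \<epsilon>) + (real (card \<tau>) - real dk) * (1 + \<delta>)"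
  have Fk: "F k = s"
  proof -
    have "F k = (\<Sum>u\<in>\<tau>. (if E u k then 1 - \<epsilon> else 1 + \<delta>))"
      unfolding F_def gW_def using kt by (intro sum.cong) auto
    also have "\<dots> = real (card {u\<in>\<tau>. E u k}) * (1 - \<epsilon>) + real (card {u\<in>\<tau>. \<not> E u k}) * (1 + \<delta>)"
      by (rule sum_if_count[OF fint])
    also have "\<dots> = s"
    proof -
      have c2: "real (card {u\<in>\<tau>. \<not> E u k}) = real (card \<tau>) - real (card {u\<in>\<tau>. E u k})"
        using card_split_real[OF fint, of "\<lambda>u. E u k"] by linarith
      show ?thesis unfolding s_def dk_def c2 ..
    qed
    finally show ?thesis .
  qed
  have Fi: "F x = r" and dle: "real d \<le> real (card \<tau>) - 1" if x: "x \<in> \<tau>" for x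
  proof -
    have nxx: "\<not> E x x" using simple x tsub unfolding simple_digraph_def by auto
    have fin': "finite (\<tau> - {x})" using fint by simp
    have dd: "card {u\<in>\<tau> - {x}. E u x} = d"
    proof -
      have "{u\<in>\<tau> - {x}. E u x} = {j\<in>\<tau>. E j x}" using nxx by auto
      then show ?thesis using assms(10) x unfolding uniform_in_degree_def in_deg_def by simp
    qed
    have "card \<tau> > 0" using x fint card_gt_0_iff by blast
    then have ct: "real (card (\<tau> - {x})) = real (card \<tau>) - 1" using x fint
      by (simp add: of_nat_diff)
    have cs: "real d + real (card {u\<in>\<tau> - {x}. \<not> E u x}) = real (card \<tau>) - 1"
      using card_split_real[OF fin', of "\<lambda>u. E u x"] dd ct by simp
    then show "real d \<le> real (card \<tau>) - 1" by linarith
    have "F x = gW E \<epsilon> \<delta> x x + (\<Sum>u\<in>\<tau> - {x}. gW E \<epsilon> \<delta> x u)"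
      unfolding F_def using x fint by (simp add: sum.remove)
    also have "\<dots> = 1 + (\<Sum>u\<in>\<tau> - {x}. (if E u x then 1 - \<epsilon> else 1 + \<delta>))"
      unfolding gW_def by (auto intro!: sum.cong)
    also have "\<dots> = 1 + (real (card {u\<in>\<tau> - {x}. E u x}) * (1 - \<epsilon>) + real (card {u\<in>\<tau> - {x}. \<not> E u x}) * (1 + \<delta>))"
      using sum_if_count[OF fin', of "\<lambda>u. E u x"] by simp
    also have "\<dots> = r"
    proof -
      have c2: "real (card {u\<in>\<tau> - {x}. \<not> E u x}) = real (card \<tau>) - 1 - real d" using cs by linarith
      show ?thesis unfolding r_def c2 dd by simp
    qed
    finally show "F x = r" .
  qed
  define one where "one = vec m (\<lambda>_. 1::real)"
  define v where "v = vec m (\<lambda>b. if b = p then 0 else (1::real))"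
  have onec: "one \<in> carrier_vec m" and vc: "v \<in> carrier_vec m" and uc: "unit_vec m p \<in> carrier_vec m"
    unfolding one_def v_def by auto
  have Av: "A *\<^sub>v v = r \<cdot>\<^sub>v one + (s - r) \<cdot>\<^sub>v unit_vec m p"
  proof (rule eq_vecI)
    show "dim_vec (A *\<^sub>v v) = dim_vec (r \<cdot>\<^sub>v one + (s - r) \<cdot>\<^sub>v unit_vec m p)"
      using A by (simp add: one_def)
    fix i assume "i < dim_vec (r \<cdot>\<^sub>v one + (s - r) \<cdot>\<^sub>v unit_vec m p)"
    then have i: "i < m" by (simp add: one_def)
    have "(A *\<^sub>v v) $ i = (\<Sum>b<m. A $$ (i, b) * v $ b)"
      using A i vc by (simp add: scalar_prod_def row_def atLeast0LessThan)
    also have "\<dots> = (\<Sum>b<card \<sigma>. gW E \<epsilon> \<delta> (pick \<sigma> i) (pick \<sigma> b) * (if pick \<sigma> b = k then 0 else 1))"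
      unfolding m_def[symmetric] using i pick_eq_k unfolding A_def v_def
      by (intro sum.cong) (auto simp: IW_entry[OF sub] m_def)
    also have "\<dots> = (\<Sum>u\<in>\<sigma>. gW E \<epsilon> \<delta> (pick \<sigma> i) u * (if u = k then 0 else 1))"
      by (rule sum_pick[OF fins, where f = "\<lambda>u. gW E \<epsilon> \<delta> (pick \<sigma> i) u * (if u = k then 0 else 1)"])
    also have "\<dots> = F (pick \<sigma> i)"
      unfolding sig F_def using fint kt by (simp add: sum.insert) (auto intro!: sum.cong)
    also have "\<dots> = (r \<cdot>\<^sub>v one + (s - r) \<cdot>\<^sub>v unit_vec m p) $ i"
    proof (cases "i = p")
      case True
      then show ?thesis using pk Fk i pm by (simp add: one_def)
    next
      case False
      then have "pick \<sigma> i \<in> \<tau>" using pick_in_set[of i \<sigma>] i pick_eq_k sig unfolding m_def by auto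
      then show ?thesis using Fi False i pm by (simp add: one_def)
    qed
    finally show "(A *\<^sub>v v) $ i = (r \<cdot>\<^sub>v one + (s - r) \<cdot>\<^sub>v unit_vec m p) $ i" .
  qed
  have e1: "C *\<^sub>v (A *\<^sub>v v) = det A \<cdot>\<^sub>v v"
  proof -
    have "C *\<^sub>v (A *\<^sub>v v) = (C * A) *\<^sub>v v" using Cc A vc by simp
    also have "\<dots> = det A \<cdot>\<^sub>v v" unfolding CA using vc by (intro eq_vecI) (auto simp: v_def)
    finally show ?thesis .
  qed
  have e2: "C *\<^sub>v (A *\<^sub>v v) = r \<cdot>\<^sub>v (C *\<^sub>v one) + (s - r) \<cdot>\<^sub>v (C *\<^sub>v unit_vec m p)"
    unfolding Av using Cc onec uc
    by (simp add: mult_add_distrib_mat_vec[of C m m] mult_mat_vec[of C m m])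
  have "(C *\<^sub>v (A *\<^sub>v v)) $ p = 0" unfolding e1 using pm by (simp add: v_def)
  then have e3: "r * (C *\<^sub>v one) $ p + (s - r) * (C *\<^sub>v unit_vec m p) $ p = 0"
    unfolding e2 using pm Cc by simp
  have e4: "(C *\<^sub>v unit_vec m p) $ p = det At"
  proof -
    have "(C *\<^sub>v unit_vec m p) $ p = C $$ (p, p)" using pm Cc by simp
    also have "\<dots> = cofactor A p p" using pm A by (simp add: C_def adj_mat_def)
    finally show ?thesis using cof by simp
  qed
  define y where "y = (B *\<^sub>v one) $ p"
  have e5: "(C *\<^sub>v one) $ p = det A * y"
    unfolding CB y_def using pm Bc onec by (simp add: scalar_prod_def row_def sum_distrib_left mult.assoc)
  have "vec m (\<lambda>_. \<theta>) = \<theta> \<cdot>\<^sub>v one" unfolding one_def by auto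
  then have "(B *\<^sub>v vec m (\<lambda>_. \<theta>)) $ p = \<theta> * y"
    unfolding y_def using Bc onec pm by (simp add: mult_mat_vec[of B m m])
  then have "\<theta> * y > 0" using pos pm by auto
  then have ypos: "y > 0" using assms(3) by (simp add: zero_less_mult_iff)
  have dpos: "\<delta> > 0" and epos: "\<epsilon> > 0" and elt: "\<epsilon> < \<delta> / (\<delta> + 1)"
    using assms(2) unfolding legal_params_def by auto
  have "\<delta> / (\<delta> + 1) < 1" using dpos by simp
  then have e1': "1 - \<epsilon> > 0" using elt by linarith
  obtain x0 where "x0 \<in> \<tau>" using assms(9) by blast
  then have dl: "real d \<le> real (card \<tau>) - 1" by (rule dle)
  have "real d * (1 - \<epsilon>) \<ge> 0" "(real (card \<tau>) - 1 - real d) * (1 + \<delta>) \<ge> 0"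
    using e1' dl dpos by auto
  then have rpos: "r > 0" unfolding r_def by linarith
  have "r - s = - \<delta> - (real d - real dk) * (\<epsilon> + \<delta>)" unfolding r_def s_def by (simp add: algebra_simps)
  moreover have "(real d - real dk) * (\<epsilon> + \<delta>) \<ge> 0" using dk_le epos dpos by auto
  ultimately have rs: "r - s < 0" using dpos by linarith
  define c where "c = (r - s) / (r * y)"
  have cneg: "c < 0" unfolding c_def using rs rpos ypos by (simp add: divide_neg_pos)
  have "r * (det A * y) + (s - r) * det At = 0" using e3 e4 e5 by simp
  then have "det A = c * det At" unfolding c_def using rpos ypos
    by (simp add: field_simps)
  then have "sgn (det A) = - sgn (det At)" using cneg by (simp add: sgn_mult)
  then show ?thesis unfolding idx_def A_def At_def by simp
qed

end
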